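(* Let $m\ge1$ be an integer and, for each $s\in(0,m)$, let $\sigma_s$ be a Borel probability measure on $\mathbb S^{N-1}$. Then $$\lim_{s\to0^+}\frac{c_{m,s}}{s}M_{s,\sigma_s}(e_s)=\frac{2}{-P^{(0)}_m},\qquad P^{(0)}_m:=\sum_{k=1}^m(-1)^k\binom{2m}{m-k}=-\frac12\binom{2m}{m}.$$
   Context: $\nu_s(U)=\int_0^\infty\int_{\mathbb S^{N-1}}\chi_U(r\theta)r^{-1-2s}\sigma_s(d\theta)\,dr$; $M_{s,\sigma}(e)=\int_{\mathbb S^{N-1}}|e\cdot\theta|^{2s}\sigma(d\theta)$; $e_s$ is a maximum point of $M_{s,\sigma_s}$ on $\mathbb S^{N-1}$; for an integer $m>s$, $c_{m,s}>0$ is defined by $\frac2{c_{m,s}}=2^m\int_{\mathbb R^N}(1-\cos(e_s\cdot y))^m\,\nu_s(dy)$. *)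

theory Defs
  imports "HOL-Probability.Probability"
begin

text \<open>The L\'evy measure nu_s on R^N (R^N rendered as a euclidean_space 'a):
  nu_s(U) = int_0^inf int_S chi_U(r theta) r^(-1-2s) sigma(d theta) dr,
  i.e. the image of (r^(-1-2s) dr on (0,inf)) x sigma under (r,theta) -> r theta.\<close>
definition nu_s :: "real \<Rightarrow> 'a::euclidean_space measure \<Rightarrow> 'a measure" where
  "nu_s s \<sigma> = distr
     (pair_measure (density lborel (\<lambda>r. indicator {0<..} r * ennreal (r powr (- 1 - 2 * s)))) \<sigma>)
     borel (\<lambda>(r, \<theta>). r *\<^sub>R \<theta>)"

definition M_s :: "real \<Rightarrow> 'a::euclidean_space measure \<Rightarrow> 'a \<Rightarrow> real" where
  "M_s s \<sigma> e = (\<integral>\<theta>. \<bar>e \<bullet> \<theta>\<bar> powr (2 * s) \<partial>\<sigma>)"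

definition c_ms :: "nat \<Rightarrow> real \<Rightarrow> 'a::euclidean_space measure \<Rightarrow> 'a \<Rightarrow> real" where
  "c_ms m s \<sigma> e = 2 / (2 ^ m * (\<integral>y. (1 - cos (e \<bullet> y)) ^ m \<partial>(nu_s s \<sigma>)))"

definition P0 :: "nat \<Rightarrow> real" where
  "P0 m = (\<Sum>k=1..m. (-1) ^ k * real ((2 * m) choose (m - k)))"

end

theory Submission
  imports Defs
begin
lemma one_minus_cos_cis: "complex_of_real (1 - cos t) = - ((cis (t/2) - cis (-t/2))^2) / 2"
proof -
  have "cos t = cos (2*(t/2))" by simp
  also have "\<dots> = (cos (t/2))^2 - (sin (t/2))^2" by (rule cos_double)
  finally have c: "cos t = (cos (t/2))^2 - (sin (t/2))^2" .
  show ?thesis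
    by (simp add: complex_eq_iff power2_eq_square c algebra_simps)
qed

lemma cos_pow_expand:
  "(1 - cos t)^m = (\<Sum>j\<le>2*m. (-1/2)^m * (-1)^(2*m-j) * real (2*m choose j) * cos ((real j - real m) * t))"
proof -
  define X where "X = cis (t/2) - cis (-t/2)"
  have "complex_of_real ((1 - cos t)^m) = (- (X^2) / 2)^m"
    by (simp only: of_real_power one_minus_cos_cis X_def)
  also have "\<dots> = (-1/2)^m * X^(2*m)"
  proof -
    have "- (X^2) / 2 = (-1/2) * X^2" by simp
    then show ?thesis by (simp only: power_mult_distrib power_mult)
  qed
  also have "X^(2*m) = (cis (t/2) + (- cis (-t/2)))^(2*m)" by (simp add: X_def)
  also have "\<dots> = (\<Sum>j\<le>2*m. of_nat (2*m choose j) * cis (t/2)^j * (- cis (-t/2))^(2*m-j))"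
    by (rule binomial_ring)
  also have "\<dots> = (\<Sum>j\<le>2*m. of_nat (2*m choose j) * (-1)^(2*m-j) * cis ((real j - real m) * t))"
  proof (rule sum.cong[OF refl])
    fix j assume j: "j \<in> {..2*m}"
    have "cis (t/2)^j * (- cis (-t/2))^(2*m-j) = (-1)^(2*m-j) * (cis (real j * (t/2)) * cis (real (2*m-j) * (-t/2)))"
    proof -
      have 1: "cis (t/2)^j = cis (real j * (t/2))" by (rule Complex.DeMoivre)
      have 2: "(- cis (-t/2))^(2*m-j) = (-1)^(2*m-j) * cis (real (2*m-j) * (-t/2))"
        by (subst power_minus) (simp only: Complex.DeMoivre)
      show ?thesis unfolding 1 2 by (simp only: mult_ac)
    qed
    also have "cis (real j * (t/2)) * cis (real (2*m-j) * (-t/2)) = cis ((real j - real m) * t)"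
      using j by (simp add: cis_mult of_nat_diff algebra_simps)
    finally show "of_nat (2*m choose j) * cis (t/2)^j * (- cis (-t/2))^(2*m-j) = of_nat (2*m choose j) * (-1)^(2*m-j) * cis ((real j - real m) * t)"
      by (simp add: mult.assoc)
  qed
  finally have "complex_of_real ((1 - cos t)^m) = (-1/2)^m * (\<Sum>j\<le>2*m. of_nat (2*m choose j) * (-1)^(2*m-j) * cis ((real j - real m) * t))" .
  then have "(1 - cos t)^m = Re ((-1/2)^m * (\<Sum>j\<le>2*m. of_nat (2*m choose j) * (-1)^(2*m-j) * cis ((real j - real m) * t)))"
    by (metis Re_complex_of_real)
  also have "\<dots> = (\<Sum>j\<le>2*m. (-1/2)^m * (-1)^(2*m-j) * real (2*m choose j) * cos ((real j - real m) * t))"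
    by (simp add: sum_distrib_left Re_sum mult_ac)
  finally show ?thesis .
qed

lemma neg1_pow_diff: "j \<le> n \<Longrightarrow> (-1::'b::comm_ring_1) ^ (n - j) = (-1)^n * (-1)^j"
proof -
  assume "j \<le> n"
  then have "(-1::'b) ^ n = (-1) ^ (n - j) * (-1)^j" by (metis le_add_diff_inverse2 power_add)
  then have "(-1::'b) ^ n * (-1)^j = (-1) ^ (n - j) * ((-1)^j * (-1)^j)" by (simp add: mult.assoc)
  also have "(-1::'b)^j * (-1)^j = 1" by (metis power_add power_minus1_even mult_2[symmetric])
  finally show ?thesis by simp
qed

lemma P0_value:
  assumes m: "m \<ge> 1"
  shows "P0 m = - (1/2) * real ((2 * m) choose m)"
proof -
  define b where "b j = real ((2*m) choose j)" for j
  have S: "(\<Sum>j\<le>2*m. (-1)^j * b j) = 0"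
    unfolding b_def using choose_alternating_sum[of "2*m"] m by simp
  have sp: "{..2*m} = {..<m} \<union> ({m} \<union> {m<..2*m})" by auto
  have "(\<Sum>j\<le>2*m. (-1)^j * b j) = (\<Sum>j<m. (-1)^j * b j) + ((-1)^m * b m + (\<Sum>j\<in>{m<..2*m}. (-1)^j * b j))"
    unfolding sp by (subst sum.union_disjoint, auto)+
  moreover have "(\<Sum>j<m. (-1)^j * b j) = (\<Sum>k=1..m. (-1)^(m-k) * b (m-k))"
    by (rule sum.reindex_bij_witness[of _ "\<lambda>j. m-j" "\<lambda>j. m-j"]) auto
  moreover have "(\<Sum>j\<in>{m<..2*m}. (-1)^j * b j) = (\<Sum>k=1..m. (-1)^(m+k) * b (m+k))"
    by (rule sum.reindex_bij_witness[of _ "\<lambda>k. m+k" "\<lambda>j. j-m"]) auto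
  moreover have "(\<Sum>k=1..m. (-1)^(m-k) * b (m-k)) = (-1)^m * P0 m"
    unfolding P0_def b_def sum_distrib_left
  proof (rule sum.cong[OF refl])
    fix k assume "k \<in> {1..m}"
    then have "k \<le> m" by simp
    then have "(-1::real)^(m-k) = (-1)^m * (-1)^k" by (rule neg1_pow_diff)
    then show "(-1)^(m-k) * real (2*m choose (m-k)) = (-1)^m * ((-1)^k * real (2*m choose (m-k)))"
      by simp
  qed
  moreover have "(\<Sum>k=1..m. (-1)^(m+k) * b (m+k)) = (-1)^m * P0 m"
    unfolding P0_def b_def sum_distrib_left
  proof (rule sum.cong[OF refl])
    fix k assume "k \<in> {1..m}"
    then have "2*m choose (m+k) = 2*m choose (m-k)"
      by (subst binomial_symmetric) (auto simp: algebra_simps)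
    then show "(-1)^(m+k) * real (2*m choose (m+k)) = (-1)^m * ((-1)^k * real (2*m choose (m-k)))"
      by (simp add: power_add)
  qed
  ultimately have "(-1)^m * (2 * P0 m + b m) = 0"
    using S by (simp add: algebra_simps)
  then have "2 * P0 m + b m = 0" by simp
  then show ?thesis unfolding b_def by simp
qed

definition dc :: "nat \<Rightarrow> nat \<Rightarrow> real" where
  "dc m j = (-1/2)^m * (-1)^(2*m-j) * real (2*m choose j)"
definition kk :: "nat \<Rightarrow> nat \<Rightarrow> real" where
  "kk m j = real j - real m"
definition GG :: "nat \<Rightarrow> real \<Rightarrow> real" where
  "GG m t = (\<Sum>j\<le>2*m. dc m j * (sin (kk m j * t) / kk m j))"
definition AA :: "nat \<Rightarrow> real" where
  "AA m = real (2*m choose m) / 2^m"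
definition CC :: "nat \<Rightarrow> real" where
  "CC m = (\<Sum>j\<le>2*m. \<bar>dc m j\<bar>)"

lemma AA_eq: "dc m m = AA m"
proof -
  have "(-1/2::real)^m * (-1)^(2*m-m) = (1/2)^m"
    by (simp add: power_mult_distrib[symmetric])
  then show ?thesis unfolding dc_def AA_def by (simp add: field_simps)
qed

lemma AA_pos: "AA m > 0"
  unfolding AA_def by simp

lemma CC_nonneg: "CC m \<ge> 0"
  unfolding CC_def by (simp add: sum_nonneg)

lemma GG_bound: "\<bar>GG m t\<bar> \<le> CC m"
proof -
  have "\<bar>GG m t\<bar> \<le> (\<Sum>j\<le>2*m. \<bar>dc m j * (sin (kk m j * t) / kk m j)\<bar>)"
    unfolding GG_def by (rule sum_abs)
  also have "\<dots> \<le> (\<Sum>j\<le>2*m. \<bar>dc m j\<bar>)"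
  proof (rule sum_mono)
    fix j assume "j \<in> {..2*m}"
    have "\<bar>sin (kk m j * t) / kk m j\<bar> \<le> 1"
    proof (cases "j = m")
      case True then show ?thesis by (simp add: kk_def)
    next
      case False
      then have "\<bar>kk m j\<bar> \<ge> 1" unfolding kk_def by (cases "j < m") auto
      moreover have "\<bar>sin (kk m j * t)\<bar> \<le> 1" by simp
      ultimately have "\<bar>sin (kk m j * t)\<bar> \<le> \<bar>kk m j\<bar>" by linarith
      then show ?thesis using \<open>\<bar>kk m j\<bar> \<ge> 1\<close> by (simp add: abs_divide divide_le_eq_1)
    qed
    then have "\<bar>dc m j\<bar> * \<bar>sin (kk m j * t) / kk m j\<bar> \<le> \<bar>dc m j\<bar> * 1"
      by (intro mult_left_mono) auto
    then show "\<bar>dc m j * (sin (kk m j * t) / kk m j)\<bar> \<le> \<bar>dc m j\<bar>" by (simp add: abs_mult)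
  qed
  finally show ?thesis unfolding CC_def .
qed

lemma GG_deriv: "(GG m has_real_derivative ((1 - cos t)^m - AA m)) (at t)"
proof -
  have "(GG m has_real_derivative (\<Sum>j\<le>2*m. dc m j * (cos (kk m j * t) * kk m j / kk m j))) (at t)"
    unfolding GG_def
    by (rule DERIV_sum) (auto intro!: derivative_eq_intros simp: field_simps)
  moreover have "(\<Sum>j\<le>2*m. dc m j * (cos (kk m j * t) * kk m j / kk m j)) = (1 - cos t)^m - AA m"
  proof -
    have fin: "finite {..2*m}" by simp
    have mm: "m \<in> {..2*m}" by simp
    have "(\<Sum>j\<le>2*m. dc m j * (cos (kk m j * t) * kk m j / kk m j))
        = (\<Sum>j\<in>{..2*m}-{m}. dc m j * (cos (kk m j * t) * kk m j / kk m j))"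
      by (subst sum.remove[OF fin mm]) (simp add: kk_def)
    also have "\<dots> = (\<Sum>j\<in>{..2*m}-{m}. dc m j * cos (kk m j * t))"
      by (rule sum.cong) (auto simp: kk_def)
    also have "\<dots> = (\<Sum>j\<le>2*m. dc m j * cos (kk m j * t)) - dc m m"
      by (subst sum.remove[OF fin mm]) (simp add: kk_def)
    also have "(\<Sum>j\<le>2*m. dc m j * cos (kk m j * t)) = (1 - cos t)^m"
      unfolding cos_pow_expand[of t m] dc_def kk_def by simp
    finally show ?thesis by (simp add: AA_eq)
  qed
  ultimately show ?thesis by simp
qed

definition hh :: "nat \<Rightarrow> real \<Rightarrow> real \<Rightarrow> real" where
  "hh m s x = x powr (-1-2 * s) * (1 - cos x)^m"

lemma powr_neg_le1: "1 \<le> (y::real) \<Longrightarrow> a \<le> 0 \<Longrightarrow> y powr a \<le> 1"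
  using powr_mono[of a 0 y] by simp

lemma interval_est:
  assumes s: "s > 0" and y: "y \<ge> 1"
  shows "hh m s integrable_on {1..y}"
    "\<bar>integral {1..y} (hh m s) - AA m * (1 - y powr (-2 * s)) / (2 * s)\<bar> \<le> 3 * CC m"
proof -
  define \<Phi> where "\<Phi> x = AA m * (- (x powr (-2 * s)) / (2 * s)) + GG m x * x powr (-1-2 * s)" for x
  define q where "q x = GG m x * (-(1+2 * s) * x powr (-2-2 * s))" for x
  have d\<Phi>: "(\<Phi> has_real_derivative (hh m s x + q x)) (at x)" if x: "x > 0" for x
  proof -
    have "(\<Phi> has_real_derivative
        AA m * (- ((-2 * s) * x powr (-2 * s - 1)) / (2 * s)) +
        (((1 - cos x)^m - AA m) * x powr (-1-2 * s) + GG m x * ((-1-2 * s) * x powr (-1-2 * s-1)))) (at x)"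
    proof -
      have a: "((\<lambda>z. AA m * (- (z powr (-2 * s)) / (2 * s))) has_real_derivative AA m * (- ((-2 * s) * x powr (-2 * s - 1)) / (2 * s))) (at x)"
        by (intro DERIV_cmult DERIV_cdivide DERIV_minus has_real_derivative_powr x)
      have b: "((\<lambda>z. GG m z * z powr (-1-2 * s)) has_real_derivative GG m x * ((-1-2 * s) * x powr (-1-2 * s-1)) + ((1-cos x)^m - AA m) * x powr (-1-2 * s)) (at x)"
        by (rule DERIV_mult'[OF GG_deriv has_real_derivative_powr[OF x]])
      show ?thesis unfolding \<Phi>_def using DERIV_add[OF a b] by (simp add: algebra_simps)
    qed
    moreover have "AA m * (- ((-2 * s) * x powr (-2 * s - 1)) / (2 * s)) +
        (((1 - cos x)^m - AA m) * x powr (-1-2 * s) + GG m x * ((-1-2 * s) * x powr (-1-2 * s-1)))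
        = hh m s x + q x"
    proof -
      have e1: "-2 * s - 1 = -1-2 * s" by simp
      have e2: "-1-2 * s-1 = -2-2 * s" by simp
      show ?thesis unfolding e1 e2 hh_def q_def using s by (simp add: field_simps)
    qed
    ultimately show ?thesis by simp
  qed
  have cont: "continuous_on {1..y} (hh m s)"
    unfolding hh_def by (intro continuous_intros) auto
  then show hint: "hh m s integrable_on {1..y}"
    by (rule integrable_continuous_interval)
  have ftc: "((\<lambda>x. hh m s x + q x) has_integral (\<Phi> y - \<Phi> 1)) {1..y}"
  proof (intro fundamental_theorem_of_calculus y)
    fix x :: real assume "x \<in> {1..y}"
    then have "x > 0" by simp
    then show "(\<Phi> has_vector_derivative hh m s x + q x) (at x within {1..y})"
      using d\<Phi> by (simp add: has_real_derivative_iff_has_vector_derivative[symmetric] has_field_derivative_at_within)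
  qed
  have qint: "(q has_integral (\<Phi> y - \<Phi> 1 - integral {1..y} (hh m s))) {1..y}"
    using has_integral_diff[OF ftc integrable_integral[OF hint]] by simp
  define g where "g x = CC m * ((1+2 * s) * x powr (-2-2 * s))" for x
  have gint: "(g has_integral (CC m * (1 - y powr (-1-2 * s)))) {1..y}"
  proof -
    have "(g has_integral ((- CC m * y powr (-1-2 * s)) - (- CC m * 1 powr (-1-2 * s)))) {1..y}"
    proof (rule fundamental_theorem_of_calculus[OF y])
      fix x :: real assume "x \<in> {1..y}"
      then have x: "x > 0" by simp
      have "((\<lambda>x. - CC m * x powr (-1-2 * s)) has_real_derivative - CC m * ((-1-2 * s) * x powr (-1-2 * s-1))) (at x)"
        by (intro DERIV_cmult has_real_derivative_powr x)
      moreover have "- CC m * ((-1-2 * s) * x powr (-1-2 * s-1)) = g x"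
      proof -
        have e2: "-1-2 * s-1 = -2-2 * s" by simp
        show ?thesis unfolding e2 g_def by (simp add: field_simps)
      qed
      ultimately show "((\<lambda>x. - CC m * x powr (-1-2 * s)) has_vector_derivative g x) (at x within {1..y})"
        by (simp add: has_real_derivative_iff_has_vector_derivative[symmetric] has_field_derivative_at_within)
    qed
    moreover have "(- CC m * y powr (-1-2 * s)) - (- CC m * 1 powr (-1-2 * s)) = CC m * (1 - y powr (-1-2 * s))"
      by (simp add: algebra_simps)
    ultimately show ?thesis by simp
  qed
  have qbound: "\<bar>integral {1..y} q\<bar> \<le> CC m"
  proof -
    have "norm (integral {1..y} q) \<le> integral {1..y} g"
    proof (rule Henstock_Kurzweil_Integration.integral_norm_bound_integral)
      show "q integrable_on {1..y}" using qint by blast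
      show "g integrable_on {1..y}" using gint by blast
      fix x assume "x \<in> {1..y}"
      then have x: "x > 0" by simp
      have "norm (q x) = \<bar>GG m x\<bar> * ((1+2 * s) * x powr (-2-2 * s))"
        unfolding q_def using s by (simp add: abs_mult)
      also have "\<dots> \<le> CC m * ((1+2 * s) * x powr (-2-2 * s))"
        using s by (intro mult_right_mono GG_bound) auto
      finally show "norm (q x) \<le> g x" unfolding g_def .
    qed
    also have "\<dots> = CC m * (1 - y powr (-1-2 * s))" using gint by (rule integral_unique)
    also have "\<dots> \<le> CC m" using CC_nonneg[of m] by (simp add: mult_left_le)
    finally show ?thesis by simp
  qed
  have qI: "integral {1..y} q = \<Phi> y - \<Phi> 1 - integral {1..y} (hh m s)"
    using qint by (rule integral_unique)
  have "\<Phi> y - \<Phi> 1 = AA m * (1 - y powr (-2 * s)) / (2 * s) + GG m y * y powr (-1-2 * s) - GG m 1"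
    unfolding \<Phi>_def using s by (simp add: field_simps)
  moreover have "\<bar>GG m y * y powr (-1-2 * s)\<bar> \<le> CC m"
  proof -
    have "\<bar>GG m y * y powr (-1-2 * s)\<bar> = \<bar>GG m y\<bar> * y powr (-1-2 * s)" by (simp add: abs_mult)
    also have "\<dots> \<le> CC m * 1"
      using GG_bound[of m y] powr_neg_le1[OF y, of "-1-2 * s"] s CC_nonneg[of m]
      by (intro mult_mono) auto
    finally show ?thesis by simp
  qed
  moreover have "\<bar>GG m 1\<bar> \<le> CC m" by (rule GG_bound)
  ultimately show "\<bar>integral {1..y} (hh m s) - AA m * (1 - y powr (-2 * s)) / (2 * s)\<bar> \<le> 3 * CC m"
    using qbound qI by linarith
qed

definition Jn :: "nat \<Rightarrow> real \<Rightarrow> ennreal" where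
  "Jn m s = (\<integral>\<^sup>+x. ennreal (hh m s x) * indicator {0<..} x \<partial>lborel)"

lemma hh_meas[measurable]: "hh m s \<in> borel_measurable borel"
  unfolding hh_def by measurable

lemma hh_nonneg: "x \<ge> 0 \<Longrightarrow> hh m s x \<ge> 0"
  unfolding hh_def by simp

lemma one_minus_cos_le: "1 - cos x \<le> (x::real)^2"
proof -
  have "cos x = cos (2 * (x/2))" by simp
  also have "\<dots> = 1 - 2 * sin (x/2) ^ 2" by (rule cos_double_sin)
  finally have "1 - cos x = 2 * sin (x/2)^2" by simp
  also have "\<dots> \<le> 2 * (x/2)^2"
  proof -
    have "sin (x/2)^2 \<le> (x/2)^2" using abs_sin_x_le_abs_x[of "x/2"] abs_le_square_iff by blast
    then show ?thesis by simp
  qed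
  also have "\<dots> \<le> x^2" by (simp add: power2_eq_square)
  finally show ?thesis .
qed

lemma lower_part:
  assumes s: "0 < s" "s < real m"
  shows "(\<integral>\<^sup>+x. ennreal (hh m s x) * indicator {0<..<1} x \<partial>lborel) \<le> ennreal (1 / (2 * real m - 2 * s))"
proof -
  have a: "2 * real m - 1 - 2 * s > -1" using s by simp
  have "(\<integral>\<^sup>+x. ennreal (hh m s x) * indicator {0<..<1} x \<partial>lborel)
      \<le> (\<integral>\<^sup>+x. ennreal (x powr (2 * real m - 1 - 2 * s)) * indicator {0..1} x \<partial>lborel)"
  proof (rule nn_integral_mono)
    fix x :: real
    show "ennreal (hh m s x) * indicator {0<..<1} x \<le> ennreal (x powr (2 * real m - 1 - 2 * s)) * indicator {0..1} x"
    proof (cases "x \<in> {0<..<1}")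
      case True
      then have x: "0 < x" by simp
      have "hh m s x \<le> x powr (-1 - 2 * s) * (x^2)^m"
        unfolding hh_def using one_minus_cos_le[of x]
        by (intro mult_left_mono power_mono) auto
      also have "\<dots> = x powr (-1 - 2 * s) * x powr (2 * real m)"
      proof -
        have "(x^2)^m = x ^ (2*m)" by (simp add: power_mult)
        also have "\<dots> = x powr (real (2*m))" using x by (simp only: powr_realpow)
        finally have "(x^2)^m = x powr (real (2*m))" .
        then show ?thesis by simp
      qed
      also have "\<dots> = x powr (2 * real m - 1 - 2 * s)"
        by (simp add: powr_add[symmetric] algebra_simps)
      finally have "hh m s x \<le> x powr (2 * real m - 1 - 2 * s)" .
      then show ?thesis using True by (simp add: indicator_def)
    next
      case False then show ?thesis by simp
    qed
  qed
  also have "\<dots> = ennreal (1 powr (2 * real m - 1 - 2 * s + 1) / (2 * real m - 1 - 2 * s + 1))"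
    by (rule nn_integral_has_integral_lebesgue'[OF _ has_integral_powr_from_0[OF a]]) auto
  also have "\<dots> = ennreal (1 / (2 * real m - 2 * s))" by simp
  finally show ?thesis .
qed

lemma upper_part:
  assumes s: "0 < s"
  shows "\<exists>L. (\<integral>\<^sup>+x. ennreal (hh m s x) * indicator {1..} x \<partial>lborel) = ennreal L \<and> L \<ge> 0
            \<and> \<bar>L - AA m / (2 * s)\<bar> \<le> 3 * CC m"
proof -
  define X where "X n = integral {1..real n + 1} (hh m s)" for n :: nat
  define Y where "Y n = AA m * (1 - (real n + 1) powr (-2 * s)) / (2 * s)" for n :: nat
  define F where "F n x = ennreal (hh m s x) * indicator {1..real n + 1} x" for n :: nat and x :: real
  have hn: "hh m s x \<ge> 0" if "x \<in> {1..}" for x using that by (intro hh_nonneg) auto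
  have XY: "\<bar>X n - Y n\<bar> \<le> 3 * CC m" for n
    unfolding X_def Y_def using interval_est(2)[OF s, of "real n + 1" m] by simp
  have FX: "integral\<^sup>N lborel (F n) = ennreal (X n)" for n
  proof -
    have "(hh m s has_integral X n) {1..real n + 1}"
      unfolding X_def using interval_est(1)[OF s, of "real n + 1" m] by (simp add: has_integral_integral)
    then show ?thesis unfolding F_def
      by (rule nn_integral_has_integral_lebesgue'[rotated]) (auto intro: hh_nonneg)
  qed
  have Fmeas: "F n \<in> borel_measurable lborel" for n unfolding F_def by measurable
  have Finc: "incseq F"
    unfolding incseq_def le_fun_def F_def
    by (auto intro!: mult_left_mono simp: indicator_def)
  have Flim: "(\<lambda>n. F n x) \<longlonglongrightarrow> ennreal (hh m s x) * indicator {1..} x" for x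
  proof (rule tendsto_eventually)
    have "\<forall>n\<ge>nat \<lceil>x\<rceil>. F n x = ennreal (hh m s x) * indicator {1..} x"
    proof (intro allI impI)
      fix n assume "n \<ge> nat \<lceil>x\<rceil>"
      then have "x \<le> real n + 1" by linarith
      then show "F n x = ennreal (hh m s x) * indicator {1..} x"
        unfolding F_def by (simp add: indicator_def)
    qed
    then show "\<forall>\<^sub>F n in sequentially. F n x = ennreal (hh m s x) * indicator {1..} x"
      using eventually_sequentially by blast
  qed
  have lim1: "(\<lambda>n. ennreal (X n)) \<longlonglongrightarrow> (\<integral>\<^sup>+x. ennreal (hh m s x) * indicator {1..} x \<partial>lborel)"
    using nn_integral_LIMSEQ[OF Finc Fmeas Flim] unfolding FX .
  have Xnn: "X n \<ge> 0" for n
    unfolding X_def by (rule integral_nonneg) (use interval_est(1)[OF s, of "real n + 1" m] hh_nonneg in auto)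
  have Xinc: "incseq X"
  proof -
    have "ennreal (X n) \<le> ennreal (X k)" if "n \<le> k" for n k
      unfolding FX[symmetric] using Finc that by (intro nn_integral_mono) (simp add: incseq_def le_fun_def)
    then show ?thesis unfolding incseq_def using Xnn by (simp add: ennreal_le_iff)
  qed
  have Ybd: "Y n \<le> AA m / (2 * s)" for n
    unfolding Y_def using s AA_pos[of m] by (simp add: divide_right_mono mult_left_le)
  have Xbd: "\<forall>n. X n \<le> AA m / (2 * s) + 3 * CC m"
    using XY Ybd by (smt (verit))
  obtain L where L: "X \<longlonglongrightarrow> L" "\<forall>i. X i \<le> L"
    using incseq_convergent[OF Xinc Xbd] by blast
  have "(\<lambda>n. ennreal (X n)) \<longlonglongrightarrow> ennreal L" using L(1) by (rule tendsto_ennrealI)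
  then have eq: "(\<integral>\<^sup>+x. ennreal (hh m s x) * indicator {1..} x \<partial>lborel) = ennreal L"
    using lim1 LIMSEQ_unique by blast
  have L0: "L \<ge> 0" using L(2) Xnn[of 0] order_trans by blast
  have fl: "filterlim (\<lambda>n. real n + 1) at_top sequentially"
    using filterlim_tendsto_add_at_top[OF tendsto_const[of 1] filterlim_real_sequentially]
    by (simp add: add.commute)
  have pl: "(\<lambda>n. (real n + 1) powr (-2 * s)) \<longlonglongrightarrow> 0"
    by (rule tendsto_neg_powr[OF _ fl]) (use s in simp)
  have Ylim: "Y \<longlonglongrightarrow> AA m * (1 - 0) / (2 * s)"
    unfolding Y_def by (intro tendsto_intros pl) (use s in simp)
  have "(\<lambda>n. \<bar>X n - Y n\<bar>) \<longlonglongrightarrow> \<bar>L - AA m / (2 * s)\<bar>"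
    using Ylim by (intro tendsto_intros L(1)) simp
  then have "\<bar>L - AA m / (2 * s)\<bar> \<le> 3 * CC m"
    by (rule LIMSEQ_le_const2) (use XY in auto)
  then show ?thesis using eq L0 by blast
qed

lemma J_est:
  assumes s: "0 < s" "s < real m"
  shows "Jn m s = ennreal (enn2real (Jn m s)) \<and> enn2real (Jn m s) \<ge> 0 \<and>
         \<bar>s * enn2real (Jn m s) - AA m / 2\<bar> \<le> s * (1 / (2 * real m - 2 * s) + 3 * CC m)"
proof -
  have split: "ennreal (hh m s x) * indicator {0<..} x =
      ennreal (hh m s x) * indicator {0<..<1} x + ennreal (hh m s x) * indicator {1..} x" for x :: real
    by (auto simp: indicator_def)
  have "Jn m s = (\<integral>\<^sup>+x. ennreal (hh m s x) * indicator {0<..<1} x \<partial>lborel)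
              + (\<integral>\<^sup>+x. ennreal (hh m s x) * indicator {1..} x \<partial>lborel)"
    unfolding Jn_def split by (rule nn_integral_add) measurable
  moreover obtain J0 where J0: "(\<integral>\<^sup>+x. ennreal (hh m s x) * indicator {0<..<1} x \<partial>lborel) = ennreal J0"
      "0 \<le> J0" "J0 \<le> 1 / (2 * real m - 2 * s)"
    using lower_part[OF s] s le_ennreal_iff[of "1 / (2 * real m - 2 * s)"] by auto
  moreover obtain L where L: "(\<integral>\<^sup>+x. ennreal (hh m s x) * indicator {1..} x \<partial>lborel) = ennreal L"
      "L \<ge> 0" "\<bar>L - AA m / (2 * s)\<bar> \<le> 3 * CC m"
    using upper_part[OF s(1), of m] by blast
  ultimately have J: "Jn m s = ennreal (J0 + L)" by (simp add: ennreal_plus)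
  have "\<bar>s * (J0 + L) - AA m / 2\<bar> = \<bar>s * J0 + s * (L - AA m / (2 * s))\<bar>"
  proof -
    have "s * (L - AA m / (2 * s)) = s * L - AA m / 2" using s by (simp add: field_simps)
    then show ?thesis by (simp add: algebra_simps)
  qed
  also have "\<dots> \<le> s * J0 + s * \<bar>L - AA m / (2 * s)\<bar>"
  proof -
    have "\<bar>s * J0 + s * (L - AA m / (2 * s))\<bar> \<le> \<bar>s * J0\<bar> + \<bar>s * (L - AA m / (2 * s))\<bar>"
      by (rule abs_triangle_ineq)
    then show ?thesis using s J0 by (simp add: abs_mult)
  qed
  also have "\<dots> \<le> s * (1 / (2 * real m - 2 * s)) + s * (3 * CC m)"
    using s J0 L by (intro add_mono mult_left_mono) auto
  finally have fin: "\<bar>s * (J0 + L) - AA m / 2\<bar> \<le> s * (1 / (2 * real m - 2 * s) + 3 * CC m)"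
    by (simp add: distrib_left)
  have e: "enn2real (Jn m s) = J0 + L" unfolding J using J0(2) L(2) by (simp only: enn2real_ennreal add_nonneg_nonneg)
  show ?thesis unfolding e using fin J J0 L by simp
qed

lemma sJ_lim:
  assumes m: "m \<ge> 1"
  shows "((\<lambda>s. s * enn2real (Jn m s)) \<longlongrightarrow> AA m / 2) (at_right 0)"
proof -
  define K where "K = 1 / real m + 3 * CC m"
  have ev: "\<forall>\<^sub>F s in at_right 0. \<bar>s * enn2real (Jn m s) - AA m / 2\<bar> \<le> s * K"
    unfolding eventually_at_right_field
  proof (intro exI[of _ "real m / 2"] conjI allI impI)
    show "(0::real) < real m / 2" using m by simp
    fix s :: real assume s: "0 < s" "s < real m / 2"
    then have s': "0 < s" "s < real m" by auto
    have "1 / (2 * real m - 2 * s) \<le> 1 / real m"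
      using s m by (intro divide_left_mono) auto
    then have "s * (1 / (2 * real m - 2 * s) + 3 * CC m) \<le> s * K"
      unfolding K_def using s by (intro mult_left_mono) auto
    then show "\<bar>s * enn2real (Jn m s) - AA m / 2\<bar> \<le> s * K"
      using J_est[OF s'] by linarith
  qed
  have l1: "((\<lambda>s. AA m / 2 - s * K) \<longlongrightarrow> AA m / 2 - 0 * K) (at_right 0)"
    by (intro tendsto_intros)
  have l2: "((\<lambda>s. AA m / 2 + s * K) \<longlongrightarrow> AA m / 2 + 0 * K) (at_right 0)"
    by (intro tendsto_intros)
  show ?thesis
    by (rule tendsto_sandwich[of "\<lambda>s. AA m / 2 - s * K" _ _ "\<lambda>s. AA m / 2 + s * K"])
       (use ev l1 l2 in \<open>auto elim: eventually_mono\<close>)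
qed

lemma scale_lemma:
  assumes m: "m \<ge> 1"
  shows "(\<integral>\<^sup>+r. indicator {0<..} r * ennreal (r powr (-1 - 2 * s)) * ennreal ((1 - cos (r * c))^m) \<partial>lborel)
         = ennreal (\<bar>c\<bar> powr (2 * s)) * Jn m s"
proof (cases "c = 0")
  case True
  then show ?thesis using m by (simp add: power_0_left)
next
  case False
  define a where "a = \<bar>c\<bar>"
  have a: "a > 0" using False unfolding a_def by simp
  define G where "G r = indicator {0<..} r * ennreal (r powr (-1 - 2 * s)) * ennreal ((1 - cos (r * c))^m)" for r :: real
  have Gm: "G \<in> borel_measurable lborel" unfolding G_def by measurable
  have cosa: "cos (r * c) = cos (a * r)" for r
    unfolding a_def by (cases "c \<ge> 0") (auto simp: mult.commute)
  have pt: "ennreal (hh m s (0 + a * x)) * indicator {0<..} (0 + a * x) = ennreal (a powr (-1 - 2 * s)) * G x" for x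
  proof (cases "x > 0")
    case True
    have "hh m s (a * x) = a powr (-1 - 2 * s) * (x powr (-1 - 2 * s) * (1 - cos (x * c))^m)"
    proof -
      have "hh m s (a * x) = (a * x) powr (-1 - 2 * s) * (1 - cos (x * c))^m"
        unfolding hh_def cosa ..
      also have "\<dots> = a powr (-1 - 2 * s) * (x powr (-1 - 2 * s) * (1 - cos (x * c))^m)"
        using a True by (simp add: powr_mult)
      finally show ?thesis .
    qed
    moreover have "a * x > 0" using a True by simp
    ultimately show ?thesis unfolding G_def using True a
      by (simp add: ennreal_mult[symmetric] mult.assoc)
  next
    case False
    then have "\<not> a * x > 0" using a by (simp add: zero_less_mult_iff)
    then show ?thesis unfolding G_def using False by simp
  qed
  have "Jn m s = ennreal \<bar>a\<bar> * (\<integral>\<^sup>+x. ennreal (hh m s (0 + a * x)) * indicator {0<..} (0 + a * x) \<partial>lborel)"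
    unfolding Jn_def by (rule nn_integral_real_affine) (use a in auto)
  also have "\<dots> = ennreal a * (ennreal (a powr (-1 - 2 * s)) * integral\<^sup>N lborel G)"
    unfolding pt using a by (simp add: nn_integral_cmult[OF Gm])
  finally have J: "Jn m s = ennreal (a * a powr (-1 - 2 * s)) * integral\<^sup>N lborel G"
    using a by (simp add: ennreal_mult mult.assoc)
  have "a powr (2 * s) * (a * a powr (-1 - 2 * s)) = 1"
  proof -
    have "a powr (2 * s) * (a * a powr (-1 - 2 * s)) = a powr (2 * s) * a powr 1 * a powr (-1 - 2 * s)"
      using a by simp
    also have "\<dots> = a powr (2 * s + 1 + (-1 - 2 * s))" by (simp only: powr_add)
    also have "\<dots> = 1" using a by simp
    finally show ?thesis .
  qed
  then have "ennreal (a powr (2 * s)) * Jn m s = integral\<^sup>N lborel G"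
  proof -
    have "ennreal (a powr (2 * s)) * Jn m s = ennreal (a powr (2 * s) * (a * a powr (-1 - 2 * s))) * integral\<^sup>N lborel G"
      unfolding J using a by (simp add: ennreal_mult mult.assoc)
    then show ?thesis using \<open>a powr (2 * s) * (a * a powr (-1 - 2 * s)) = 1\<close> by simp
  qed
  then show ?thesis unfolding G_def a_def by simp
qed

lemma nu_int:
  fixes \<sigma> :: "'a::euclidean_space measure" and e :: 'a
  assumes sets: "sets \<sigma> = sets borel" and sf: "sigma_finite_measure \<sigma>" and m: "m \<ge> 1"
  shows "(\<integral>\<^sup>+y. ennreal ((1 - cos (e \<bullet> y))^m) \<partial>nu_s s \<sigma>)
         = Jn m s * (\<integral>\<^sup>+\<theta>. ennreal (\<bar>e \<bullet> \<theta>\<bar> powr (2 * s)) \<partial>\<sigma>)"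
proof -
  define dd where "dd r = indicator {0<..} r * ennreal (r powr (-1 - 2 * s))" for r :: real
  define D where "D = density lborel dd"
  have ddm: "dd \<in> borel_measurable lborel" unfolding dd_def by measurable
  have sfD: "sigma_finite_measure D"
    unfolding D_def
    by (subst sigma_finite_measure.sigma_finite_iff_density_finite[OF sigma_finite_lborel ddm]) (auto simp: dd_def indicator_def)
  interpret P: pair_sigma_finite D \<sigma>
    unfolding pair_sigma_finite_def using sfD sf by blast
  have setsD: "sets D = sets borel" unfolding D_def by simp
  have sp: "sets (D \<Otimes>\<^sub>M \<sigma>) = sets (borel \<Otimes>\<^sub>M borel)"
    by (rule sets_pair_measure_cong[OF setsD sets])
  have gm0: "(\<lambda>(r::real, \<theta>::'a). r *\<^sub>R \<theta>) \<in> borel_measurable (borel \<Otimes>\<^sub>M borel)"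
    by measurable
  have gm: "(\<lambda>(r::real, \<theta>::'a). r *\<^sub>R \<theta>) \<in> borel_measurable (D \<Otimes>\<^sub>M \<sigma>)"
    using gm0 measurable_cong_sets[OF sp refl] by blast
  have fm: "(\<lambda>y::'a. ennreal ((1 - cos (e \<bullet> y))^m)) \<in> borel_measurable borel"
    by measurable
  have Fm: "(\<lambda>x. ennreal ((1 - cos (e \<bullet> (case x of (r, \<theta>) \<Rightarrow> r *\<^sub>R \<theta>)))^m)) \<in> borel_measurable (D \<Otimes>\<^sub>M \<sigma>)"
    using measurable_compose[OF gm fm] by (simp add: comp_def)
  have "(\<integral>\<^sup>+y. ennreal ((1 - cos (e \<bullet> y))^m) \<partial>nu_s s \<sigma>)
      = (\<integral>\<^sup>+x. ennreal ((1 - cos (e \<bullet> (case x of (r, \<theta>) \<Rightarrow> r *\<^sub>R \<theta>)))^m) \<partial>(D \<Otimes>\<^sub>M \<sigma>))"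
    unfolding nu_s_def D_def[symmetric] dd_def[symmetric, abs_def]
    by (rule nn_integral_distr[OF gm]) (use fm in simp)
  also have "\<dots> = (\<integral>\<^sup>+\<theta>. (\<integral>\<^sup>+r. ennreal ((1 - cos (e \<bullet> (r *\<^sub>R \<theta>)))^m) \<partial>D) \<partial>\<sigma>)"
    using P.nn_integral_snd[OF Fm] by simp
  also have "\<dots> = (\<integral>\<^sup>+\<theta>. ennreal (\<bar>e \<bullet> \<theta>\<bar> powr (2 * s)) * Jn m s \<partial>\<sigma>)"
  proof (rule nn_integral_cong)
    fix \<theta> :: 'a
    have "(\<integral>\<^sup>+r. ennreal ((1 - cos (e \<bullet> (r *\<^sub>R \<theta>)))^m) \<partial>D)
        = (\<integral>\<^sup>+r. dd r * ennreal ((1 - cos (e \<bullet> (r *\<^sub>R \<theta>)))^m) \<partial>lborel)"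
      unfolding D_def by (rule nn_integral_density[OF ddm]) measurable
    also have "\<dots> = (\<integral>\<^sup>+r. indicator {0<..} r * ennreal (r powr (-1 - 2 * s)) * ennreal ((1 - cos (r * (e \<bullet> \<theta>)))^m) \<partial>lborel)"
      unfolding dd_def by simp
    also have "\<dots> = ennreal (\<bar>e \<bullet> \<theta>\<bar> powr (2 * s)) * Jn m s"
      by (rule scale_lemma[OF m])
    finally show "(\<integral>\<^sup>+r. ennreal ((1 - cos (e \<bullet> (r *\<^sub>R \<theta>)))^m) \<partial>D) = ennreal (\<bar>e \<bullet> \<theta>\<bar> powr (2 * s)) * Jn m s" .
  qed
  also have "\<dots> = (\<integral>\<^sup>+\<theta>. ennreal (\<bar>e \<bullet> \<theta>\<bar> powr (2 * s)) \<partial>\<sigma>) * Jn m s"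
  proof (rule nn_integral_multc)
    have "(\<lambda>\<theta>::'a. ennreal (\<bar>e \<bullet> \<theta>\<bar> powr (2 * s))) \<in> borel_measurable borel" by measurable
    then show "(\<lambda>\<theta>. ennreal (\<bar>e \<bullet> \<theta>\<bar> powr (2 * s))) \<in> borel_measurable \<sigma>"
      using measurable_cong_sets[OF sets refl] by blast
  qed
  finally show ?thesis by (simp add: mult.commute)
qed

lemma M_integrable:
  fixes \<sigma> :: "'a::euclidean_space measure" and x :: 'a
  assumes sets: "sets \<sigma> = sets borel" and prob: "prob_space \<sigma>"
    and sph: "emeasure \<sigma> (sphere 0 1) = 1" and s: "s > 0"
  shows "integrable \<sigma> (\<lambda>\<theta>. \<bar>x \<bullet> \<theta>\<bar> powr (2 * s))"
    "(\<integral>\<^sup>+\<theta>. ennreal (\<bar>x \<bullet> \<theta>\<bar> powr (2 * s)) \<partial>\<sigma>) = ennreal (M_s s \<sigma> x)"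
    "AE \<theta> in \<sigma>. norm \<theta> = 1"
proof -
  interpret prob_space \<sigma> by (rule prob)
  have sph_ev: "sphere (0::'a) 1 \<in> sets \<sigma>" unfolding sets by simp
  have "prob (sphere 0 1) = 1" using sph unfolding measure_def by simp
  then show AE1: "AE \<theta> in \<sigma>. norm \<theta> = 1"
  proof -
    have "AE \<theta> in \<sigma>. \<theta> \<in> sphere 0 1" by (rule AE_prob_1) fact
    then show ?thesis by (rule eventually_mono) simp
  qed
  have meas: "(\<lambda>\<theta>. \<bar>x \<bullet> \<theta>\<bar> powr (2 * s)) \<in> borel_measurable \<sigma>"
  proof -
    have "(\<lambda>\<theta>::'a. \<bar>x \<bullet> \<theta>\<bar> powr (2 * s)) \<in> borel_measurable borel" by measurable
    then show ?thesis using measurable_cong_sets[OF sets refl] by blast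
  qed
  have bnd: "AE \<theta> in \<sigma>. norm (\<bar>x \<bullet> \<theta>\<bar> powr (2 * s)) \<le> norm x powr (2 * s)"
    using AE1
  proof (rule eventually_mono)
    fix \<theta> :: 'a assume n: "norm \<theta> = 1"
    have "\<bar>x \<bullet> \<theta>\<bar> \<le> norm x" using Cauchy_Schwarz_ineq2[of x \<theta>] n by simp
    then have "\<bar>x \<bullet> \<theta>\<bar> powr (2 * s) \<le> norm x powr (2 * s)"
      using s by (intro powr_mono2) auto
    then show "norm (\<bar>x \<bullet> \<theta>\<bar> powr (2 * s)) \<le> norm x powr (2 * s)" by simp
  qed
  show int: "integrable \<sigma> (\<lambda>\<theta>. \<bar>x \<bullet> \<theta>\<bar> powr (2 * s))"
    by (rule integrable_const_bound[OF bnd meas])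
  show "(\<integral>\<^sup>+\<theta>. ennreal (\<bar>x \<bullet> \<theta>\<bar> powr (2 * s)) \<partial>\<sigma>) = ennreal (M_s s \<sigma> x)"
    unfolding M_s_def by (rule nn_integral_eq_integral[OF int]) simp
qed

lemma M_pos:
  fixes \<sigma> :: "'a::euclidean_space measure" and e :: 'a
  assumes sets: "sets \<sigma> = sets borel" and prob: "prob_space \<sigma>"
    and sph: "emeasure \<sigma> (sphere 0 1) = 1" and s: "s > 0"
    and emax: "\<And>x. x \<in> sphere 0 1 \<Longrightarrow> M_s s \<sigma> x \<le> M_s s \<sigma> e"
  shows "M_s s \<sigma> e > 0"
proof (rule ccontr)
  assume "\<not> M_s s \<sigma> e > 0"
  then have le0: "M_s s \<sigma> e \<le> 0" by simp
  interpret prob_space \<sigma> by (rule prob)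
  define g where "g \<theta> = (\<Sum>b\<in>Basis. \<bar>b \<bullet> \<theta>\<bar> powr (2 * s))" for \<theta> :: 'a
  have intb: "integrable \<sigma> (\<lambda>\<theta>. \<bar>b \<bullet> \<theta>\<bar> powr (2 * s))" for b :: 'a
    by (rule M_integrable(1)[OF sets prob sph s])
  have gint: "integrable \<sigma> g" unfolding g_def by (rule Bochner_Integration.integrable_sum) (rule intb)
  have "integral\<^sup>L \<sigma> g = (\<Sum>b\<in>Basis. M_s s \<sigma> b)"
    unfolding g_def M_s_def by (rule Bochner_Integration.integral_sum) (use intb in auto)
  also have "\<dots> \<le> (\<Sum>b\<in>(Basis::'a set). 0)"
  proof (rule sum_mono)
    fix b :: 'a assume "b \<in> Basis"
    then have "b \<in> sphere 0 1" by simp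
    then show "M_s s \<sigma> b \<le> 0" using emax le0 by force
  qed
  finally have ile: "integral\<^sup>L \<sigma> g \<le> 0" by simp
  have gnn: "AE \<theta> in \<sigma>. 0 \<le> g \<theta>" unfolding g_def by (intro AE_I2 sum_nonneg) simp
  have gpos: "AE \<theta> in \<sigma>. 0 < g \<theta>"
    using M_integrable(3)[OF sets prob sph s]
  proof (rule eventually_mono)
    fix \<theta> :: 'a assume "norm \<theta> = 1"
    then have "\<theta> \<noteq> 0" by auto
    then obtain b where b: "b \<in> Basis" "\<theta> \<bullet> b \<noteq> 0" using euclidean_all_zero_iff by blast
    have "0 < \<bar>b \<bullet> \<theta>\<bar> powr (2 * s)" using b by (simp add: inner_commute)
    then show "0 < g \<theta>" unfolding g_def
      by (intro sum_pos2[OF _ b(1)]) auto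
  qed
  have "integral\<^sup>L \<sigma> g \<ge> 0" using gnn by (rule integral_nonneg_AE)
  with ile have "integral\<^sup>L \<sigma> g = 0" by simp
  then have "AE \<theta> in \<sigma>. g \<theta> = 0" using integral_nonneg_eq_0_iff_AE[OF gint gnn] by simp
  with gpos have "AE \<theta> in \<sigma>. False" by eventually_elim simp
  then show False by simp
qed

theorem lemma3p7:
  fixes m :: nat
    and \<sigma> :: "real \<Rightarrow> 'a::euclidean_space measure"
    and e :: "real \<Rightarrow> 'a"
  assumes m: "m \<ge> 1"
    and borel: "\<And>s. s \<in> {0<..<real m} \<Longrightarrow> sets (\<sigma> s) = sets borel"
    and prob: "\<And>s. s \<in> {0<..<real m} \<Longrightarrow> prob_space (\<sigma> s)"
    and on_sphere: "\<And>s. s \<in> {0<..<real m} \<Longrightarrow> emeasure (\<sigma> s) (sphere 0 1) = 1"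
    and e_sphere: "\<And>s. s \<in> {0<..<real m} \<Longrightarrow> e s \<in> sphere 0 1"
    and e_max: "\<And>s x. s \<in> {0<..<real m} \<Longrightarrow> x \<in> sphere 0 1 \<Longrightarrow>
                   M_s s (\<sigma> s) x \<le> M_s s (\<sigma> s) (e s)"
  shows "((\<lambda>s. c_ms m s (\<sigma> s) (e s) / s * M_s s (\<sigma> s) (e s)) \<longlongrightarrow> 2 / (- P0 m)) (at_right 0)
         \<and> P0 m = - (1/2) * real ((2 * m) choose m)"
proof
  show P: "P0 m = - (1/2) * real ((2 * m) choose m)" by (rule P0_value[OF m])
  define T where "T s = enn2real (Jn m s)" for s
  have key: "c_ms m s (\<sigma> s) (e s) / s * M_s s (\<sigma> s) (e s) = 2 / (2 ^ m * (s * T s))"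
    if s: "s \<in> {0<..<real m}" for s
  proof -
    have s0: "0 < s" "s < real m" using s by auto
    note sets = borel[OF s] and pr = prob[OF s] and sph = on_sphere[OF s]
    interpret prob_space "\<sigma> s" by (rule pr)
    have sf: "sigma_finite_measure (\<sigma> s)" by unfold_locales
    define Mv where "Mv = M_s s (\<sigma> s) (e s)"
    have Mpos: "Mv > 0" unfolding Mv_def
      by (rule M_pos[OF sets pr sph s0(1)]) (rule e_max[OF s])
    have JT: "Jn m s = ennreal (T s)" "T s \<ge> 0"
      using J_est[OF s0] unfolding T_def by auto
    have nn: "(\<integral>\<^sup>+y. ennreal ((1 - cos (e s \<bullet> y))^m) \<partial>nu_s s (\<sigma> s)) = ennreal (T s * Mv)"
      unfolding nu_int[OF sets sf m] M_integrable(2)[OF sets pr sph s0(1)] JT(1) Mv_def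
      using JT(2) Mpos unfolding Mv_def by (simp add: ennreal_mult)
    have fmeas: "(\<lambda>y. (1 - cos (e s \<bullet> y))^m) \<in> borel_measurable (nu_s s (\<sigma> s))"
      unfolding nu_s_def by simp
    have "(\<integral>y. (1 - cos (e s \<bullet> y))^m \<partial>nu_s s (\<sigma> s)) = enn2real (\<integral>\<^sup>+y. ennreal ((1 - cos (e s \<bullet> y))^m) \<partial>nu_s s (\<sigma> s))"
      by (rule integral_eq_nn_integral[OF fmeas]) simp
    also have "\<dots> = T s * Mv" unfolding nn using JT(2) Mpos by simp
    finally have I: "(\<integral>y. (1 - cos (e s \<bullet> y))^m \<partial>nu_s s (\<sigma> s)) = T s * Mv" .
    show ?thesis
      unfolding c_ms_def I Mv_def[symmetric]
      using Mpos s0 by (cases "T s = 0") (simp_all add: field_simps)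
  qed
  have ev: "\<forall>\<^sub>F s in at_right 0. 2 / (2 ^ m * (s * T s)) = c_ms m s (\<sigma> s) (e s) / s * M_s s (\<sigma> s) (e s)"
    unfolding eventually_at_right_field
    by (rule exI[of _ "real m"]) (use m key in auto)
  have AA2: "2 ^ m * (AA m / 2) = - P0 m"
    unfolding P AA_def by simp
  have lim: "((\<lambda>s. 2 / (2 ^ m * (s * T s))) \<longlongrightarrow> 2 / (2 ^ m * (AA m / 2))) (at_right 0)"
    unfolding T_def using AA_pos[of m]
    by (intro tendsto_intros sJ_lim[OF m]) simp
  show "((\<lambda>s. c_ms m s (\<sigma> s) (e s) / s * M_s s (\<sigma> s) (e s)) \<longlongrightarrow> 2 / (- P0 m)) (at_right 0)"
    using Lim_transform_eventually[OF lim ev] unfolding AA2 .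
qed

end
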